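(* Let $\Sigma$ be a positive definite $5\times 5$ real matrix of the form $\Sigma=\Delta+\Gamma\Gamma^t$ with $\Delta$ positive definite diagonal and $\Gamma\in\mathbb{R}^{5\times 2}$ of rank $2$. Assume that $\Sigma$ admits no representation $\Sigma=\Delta'+\Gamma'\Gamma'^t$ with $\Delta'$ positive definite diagonal and $\Gamma'\in\mathbb{R}^{5\times 2}$ of rank at most $1$, and that every row of $\Sigma$ contains at least one nonzero off-diagonal entry. Let $k$ be the largest integer $n$ for which there is $A\subseteq\{1,\dots,5\}$ with $|A|=n$ and $\mathrm{rk}(\Gamma_A)=1$, where $\Gamma_A$ denotes the rows of $\Gamma$ indexed by $A$. Then $k\le 3$, and: (i) If $k\in\{1,2\}$, then for every representation $\Sigma=D+GG^t$ with $D$ positive definite diagonal and $G\in\mathbb{R}^{5\times 2}$, we have $GG^t=\Gamma\Gamma^t$. (ii) If $k=3$, then after permuting rows (and correspondingly rows and columns of $\Sigma$) so that $\mathrm{rk}(\Gamma_{\{1,2,3\}})=1$, there is an orthogonal $2\times 2$ matrix $Q$ such that $\Gamma Q=(\gamma_{ij})$ satisfies $\gamma_{12}=\gamma_{22}=\gamma_{32}=0$ and $\gamma_{11},\gamma_{21},\gamma_{31},\gamma_{42},\gamma_{52}$ are all nonzero. Moreover, for every other representation $\Sigma=D+GG^t$ with $D$ positive definite diagonal and $G\in\mathbb{R}^{5\times 2}$, there is an orthogonal $2\times 2$ matrix $Q'$ such that $GQ'=(g_{ij})$ has $g_{12}=g_{22}=g_{32}=0$, $g_{42}\neq0$, $g_{52}\neq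 0$, the first column of $GQ'$ equals the first column of $\Gamma Q$, and $g_{42}g_{52}=\gamma_{42}\gamma_{52}$. *)

theory Defs
  imports "HOL-Analysis.Analysis" "HOL-Library.Numeral_Type"
begin

definition pos_def :: "real^'n^'n \<Rightarrow> bool" where
  "pos_def S \<longleftrightarrow> transpose S = S \<and> (\<forall>x. x \<noteq> 0 \<longrightarrow> x \<bullet> (S *v x) > 0)"

definition pd_diag :: "real^'n^'n \<Rightarrow> bool" where
  "pd_diag D \<longleftrightarrow> (\<forall>i j. i \<noteq> j \<longrightarrow> D$i$j = 0) \<and> (\<forall>i. D$i$i > 0)"

definition subrank :: "real^'n^'m \<Rightarrow> 'm set \<Rightarrow> nat" where
  "subrank G A = dim {row i G | i. i \<in> A}"

definition kmax :: "real^'n^'m \<Rightarrow> nat" where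
  "kmax G = Max {card A | A. subrank G A = 1}"

end

theory Submission
  imports Defs
begin

definition wedge :: "(5 \<Rightarrow> real) \<Rightarrow> (5 \<Rightarrow> real) \<Rightarrow> 5 \<Rightarrow> 5 \<Rightarrow> real" where
  "wedge p q i j = p i * q j - q i * p j"

lemma wedge_swap: "wedge p q j i = - wedge p q i j" by (simp add: wedge_def)

lemma minor_id: "wedge p q i j * wedge p q k l =
   (p i*p k + q i*q k)*(p j*p l + q j*q l) - (p i*p l + q i*q l)*(p j*p k + q j*q k)"
  by (simp add: wedge_def algebra_simps)

lemma sq_id: "(p i^2+q i^2) * (p j*p k + q j*q k) = (p i*p j + q i*q j)*(p i*p k + q i*q k) + wedge p q i j * wedge p q i k"
  by (simp add: wedge_def algebra_simps power2_eq_square)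

lemma orth_id: "(p j^2+q j^2) * wedge p q k l = (p j*p k + q j*q k) * wedge p q j l - (p j*p l + q j*q l) * wedge p q j k"
  by (simp add: wedge_def algebra_simps power2_eq_square)

lemma lagr_id: "(p k*p l + q k*q l)^2 + (wedge p q k l)^2 = (p k^2+q k^2)*(p l^2+q l^2)"
  by (simp add: wedge_def algebra_simps power2_eq_square)

lemma card5: "CARD(5) = 5" by simp

lemma compl2: assumes "(i::5) \<noteq> j" shows "\<exists>c d e. distinct [i,j,c,d,e]"
proof -
  have "card (UNIV - {i,j}) = 3" using assms by (simp add: card_Diff_subset)
  then obtain x y z where "UNIV - {i,j} = {x,y,z}" "x\<noteq>y" "y\<noteq>z" "x\<noteq>z" by (auto simp: card_3_iff)
  then have "distinct [i,j,x,y,z]" using assms by (auto simp: set_eq_iff)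
  then show ?thesis by blast
qed

lemma compl3: assumes "distinct [i,j,k::5]" shows "\<exists>l m. distinct [i,j,k,l,m]"
proof -
  have "card (UNIV - {i,j,k}) = 2" using assms by (simp add: card_Diff_subset)
  then obtain x y where "UNIV - {i,j,k} = {x,y}" "x\<noteq>y" by (auto simp: card_2_iff)
  then have "distinct [i,j,k,x,y]" using assms by (auto simp: set_eq_iff)
  then show ?thesis by blast
qed

lemma compl1: "\<exists>j k l. distinct [i::5,j,k,l]"
proof -
  have "card (UNIV - {i}) = 4" by (simp add: card_Diff_subset)
  then obtain j where "j \<in> UNIV - {i}" by (metis card.empty ex_in_conv zero_neq_numeral)
  then obtain c d e where "distinct [i,j,c,d,e]" using compl2[of i j] by auto
  then show ?thesis by auto
qed


locale cfg =
  fixes p q u v :: "5 \<Rightarrow> real"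
  assumes off: "\<And>i j. i \<noteq> j \<Longrightarrow> u i* u j + v i* v j = p i*p j + q i*q j"
begin

abbreviation "W \<equiv> wedge p q"
abbreviation "w \<equiv> wedge u v"

lemma minor: assumes "distinct [i,j,k,l]" shows "w i j * w k l = W i j * W k l"
  using assms by (simp add: minor_id[of u v] minor_id[of p q] off)

end

locale cfg2 = cfg +
  assumes nz: "\<And>i. p i \<noteq> 0 \<or> q i \<noteq> 0"
  and H2: "\<And>i j k. distinct [i,j,k] \<Longrightarrow> W i j \<noteq> 0 \<or> W i k \<noteq> 0"
begin

lemma S0: assumes "i \<noteq> j" "W i j \<noteq> 0" shows "w i j \<noteq> 0"
proof -
  obtain c d e where d: "distinct [i,j,c,d,e]" using compl2[OF assms(1)] by blast
  have "W c d \<noteq> 0 \<or> W c e \<noteq> 0" using H2[of c d e] d by auto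
  then show ?thesis
  proof
    assume "W c d \<noteq> 0"
    then have "w i j * w c d \<noteq> 0" using minor[of i j c d] d assms by auto
    then show ?thesis by auto
  next
    assume "W c e \<noteq> 0"
    then have "w i j * w c e \<noteq> 0" using minor[of i j c e] d assms by auto
    then show ?thesis by auto
  qed
qed

lemma S0': assumes "i \<noteq> j" "W i j = 0" shows "w i j = 0"
proof -
  obtain c d e where d: "distinct [i,j,c,d,e]" using compl2[OF assms(1)] by blast
  have "W c d \<noteq> 0 \<or> W c e \<noteq> 0" using H2[of c d e] d by auto
  then show ?thesis
  proof
    assume h: "W c d \<noteq> 0"
    then have "w c d \<noteq> 0" using S0[of c d] d by auto
    moreover have "w i j * w c d = 0" using minor[of i j c d] d assms by auto
    ultimately show ?thesis by auto
  next
    assume h: "W c e \<noteq> 0"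
    then have "w c e \<noteq> 0" using S0[of c e] d by auto
    moreover have "w i j * w c e = 0" using minor[of i j c e] d assms by auto
    ultimately show ?thesis by auto
  qed
qed

lemma R: assumes "distinct [a,b,c,d,e]" "W d e \<noteq> 0"
  shows "w a b * W a c = w a c * W a b"
proof -
  have wde: "w d e \<noteq> 0" using S0[of d e] assms by auto
  have 1: "w a b * w d e = W a b * W d e" using minor[of a b d e] assms by auto
  have 2: "w a c * w d e = W a c * W d e" using minor[of a c d e] assms by auto
  have "w d e * (w a b * W a c - w a c * W a b) = 0"
    using 1 2 by (simp add: algebra_simps)
  then show ?thesis using wde by simp
qed

lemma S1core: assumes "distinct [a,b,c,d,e]" "W a b \<noteq> 0" "W a c \<noteq> 0" "W c d \<noteq> 0"
   "W d e \<noteq> 0" "W b e \<noteq> 0"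
  shows "(w a b)^2 = (W a b)^2"
proof -
  have 1: "w a b * W a c = w a c * W a b" using R[of a b c d e] assms by auto
  have 2: "w c a * W c d = w c d * W c a" using R[of c a d b e] assms by auto
  have 3: "w a b * w c d = W a b * W c d" using minor[of a b c d] assms by auto
  define t where "t = w a b / W a b"
  have wab: "w a b = t * W a b" using assms by (simp add: t_def)
  have wac: "w a c = t * W a c" using 1 assms(2) unfolding wab
    by (metis mult.assoc mult.commute mult_cancel_right)
  have wcd: "w c d = t * W c d" using 2 assms(3) unfolding wedge_swap[of u v c a] wedge_swap[of p q c a] wac
    by (smt (verit) mult.assoc mult.commute mult_cancel_left mult_minus_left)
  have "t*t * (W a b * W c d) = 1 * (W a b * W c d)" using 3 unfolding wab wcd by (simp add: algebra_simps)
  then have "t*t = 1" using assms by simp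
  then show ?thesis unfolding wab by (simp add: power2_eq_square algebra_simps)
qed

lemma Wsym0: "W a b = 0 \<longleftrightarrow> W b a = 0" by (simp add: wedge_swap[of p q a b])

lemma S1: assumes "a \<noteq> b" shows "(w a b)^2 = (W a b)^2"
proof (cases "W a b = 0")
  case True then show ?thesis using S0' assms by simp
next
  case F: False
  obtain c d e where d: "distinct [a,b,c,d,e]" using compl2[OF assms(1)] by blast
  have sw: "W b a \<noteq> 0" "(w b a)^2 = (w a b)^2" "(W b a)^2 = (W a b)^2" using F
    by (auto simp: wedge_swap[of _ _ b a])
  have Q0: "W a b \<noteq> 0 \<or> W a c \<noteq> 0" using H2[of a b c] d by auto
  have Q1: "W a b \<noteq> 0 \<or> W a d \<noteq> 0" using H2[of a b d] d by auto
  have Q2: "W a b \<noteq> 0 \<or> W a e \<noteq> 0" using H2[of a b e] d by auto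
  have Q3: "W a c \<noteq> 0 \<or> W a d \<noteq> 0" using H2[of a c d] d by auto
  have Q4: "W a c \<noteq> 0 \<or> W a e \<noteq> 0" using H2[of a c e] d by auto
  have Q5: "W a d \<noteq> 0 \<or> W a e \<noteq> 0" using H2[of a d e] d by auto
  have Q6: "W b a \<noteq> 0 \<or> W b c \<noteq> 0" using H2[of b a c] d by auto
  have Q7: "W b a \<noteq> 0 \<or> W b d \<noteq> 0" using H2[of b a d] d by auto
  have Q8: "W b a \<noteq> 0 \<or> W b e \<noteq> 0" using H2[of b a e] d by auto
  have Q9: "W b c \<noteq> 0 \<or> W b d \<noteq> 0" using H2[of b c d] d by auto
  have Q10: "W b c \<noteq> 0 \<or> W b e \<noteq> 0" using H2[of b c e] d by auto
  have Q11: "W b d \<noteq> 0 \<or> W b e \<noteq> 0" using H2[of b d e] d by auto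
  have Q12: "W c a \<noteq> 0 \<or> W c b \<noteq> 0" using H2[of c a b] d by auto
  have Q13: "W c a \<noteq> 0 \<or> W c d \<noteq> 0" using H2[of c a d] d by auto
  have Q14: "W c a \<noteq> 0 \<or> W c e \<noteq> 0" using H2[of c a e] d by auto
  have Q15: "W c b \<noteq> 0 \<or> W c d \<noteq> 0" using H2[of c b d] d by auto
  have Q16: "W c b \<noteq> 0 \<or> W c e \<noteq> 0" using H2[of c b e] d by auto
  have Q17: "W c d \<noteq> 0 \<or> W c e \<noteq> 0" using H2[of c d e] d by auto
  have Q18: "W d a \<noteq> 0 \<or> W d b \<noteq> 0" using H2[of d a b] d by auto
  have Q19: "W d a \<noteq> 0 \<or> W d c \<noteq> 0" using H2[of d a c] d by auto
  have Q20: "W d a \<noteq> 0 \<or> W d e \<noteq> 0" using H2[of d a e] d by auto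
  have Q21: "W d b \<noteq> 0 \<or> W d c \<noteq> 0" using H2[of d b c] d by auto
  have Q22: "W d b \<noteq> 0 \<or> W d e \<noteq> 0" using H2[of d b e] d by auto
  have Q23: "W d c \<noteq> 0 \<or> W d e \<noteq> 0" using H2[of d c e] d by auto
  have Q24: "W e a \<noteq> 0 \<or> W e b \<noteq> 0" using H2[of e a b] d by auto
  have Q25: "W e a \<noteq> 0 \<or> W e c \<noteq> 0" using H2[of e a c] d by auto
  have Q26: "W e a \<noteq> 0 \<or> W e d \<noteq> 0" using H2[of e a d] d by auto
  have Q27: "W e b \<noteq> 0 \<or> W e c \<noteq> 0" using H2[of e b c] d by auto
  have Q28: "W e b \<noteq> 0 \<or> W e d \<noteq> 0" using H2[of e b d] d by auto
  have Q29: "W e c \<noteq> 0 \<or> W e d \<noteq> 0" using H2[of e c d] d by auto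
  have P0: "distinct [a,b,c,d,e]" using d by auto
  have P1: "distinct [a,b,c,e,d]" using d by auto
  have P2: "distinct [a,b,d,c,e]" using d by auto
  have P3: "distinct [a,b,d,e,c]" using d by auto
  have P4: "distinct [a,b,e,c,d]" using d by auto
  have P5: "distinct [a,b,e,d,c]" using d by auto
  have P6: "distinct [b,a,c,d,e]" using d by auto
  have P7: "distinct [b,a,c,e,d]" using d by auto
  have P8: "distinct [b,a,d,c,e]" using d by auto
  have P9: "distinct [b,a,d,e,c]" using d by auto
  have P10: "distinct [b,a,e,c,d]" using d by auto
  have P11: "distinct [b,a,e,d,c]" using d by auto
  note SS = S1core[OF P0] S1core[OF P1] S1core[OF P2] S1core[OF P3] S1core[OF P4] S1core[OF P5] S1core[OF P6] S1core[OF P7] S1core[OF P8] S1core[OF P9] S1core[OF P10] S1core[OF P11]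
  note YY = Wsym0[of a b] Wsym0[of a c] Wsym0[of a d] Wsym0[of a e] Wsym0[of b c] Wsym0[of b d] Wsym0[of b e] Wsym0[of c d] Wsym0[of c e] Wsym0[of d e]
  have dd: "a\<noteq>b" "a\<noteq>c" "a\<noteq>d" "a\<noteq>e" "b\<noteq>c" "b\<noteq>d" "b\<noteq>e" "c\<noteq>d" "c\<noteq>e" "d\<noteq>e"
    "b\<noteq>a" "c\<noteq>a" "d\<noteq>a" "e\<noteq>a" "c\<noteq>b" "d\<noteq>b" "e\<noteq>b" "d\<noteq>c" "e\<noteq>c" "e\<noteq>d" using d by auto
  show ?thesis using Q0 Q1 Q2 Q3 Q4 Q5 Q6 Q7 Q8 Q9 Q10 Q11 Q12 Q13 Q14 Q15 Q16 Q17 Q18 Q19 Q20 Q21 Q22 Q23 Q24 Q25 Q26 Q27 Q28 Q29 SS YY sw F by argo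
qed

lemma S2a: assumes "distinct [i,j,k,l,m]" "W l m \<noteq> 0"
  shows "w i j * w i k = W i j * W i k"
proof -
  have r: "w i j * W i k = w i k * W i j" using R[of i j k l m] assms by auto
  show ?thesis
  proof (cases "W i k = 0")
    case True
    then have "w i k = 0" using S0'[of i k] assms by auto
    then show ?thesis using True by simp
  next
    case False
    have s: "(w i k)^2 = (W i k)^2" using S1[of i k] assms by auto
    have "W i k * (w i j * w i k) = W i k * (W i j * W i k)"
    proof -
      have "W i k * (w i j * w i k) = (w i j * W i k) * w i k" by (simp add: algebra_simps)
      also have "\<dots> = (w i k)^2 * W i j" using r by (simp add: power2_eq_square algebra_simps)
      also have "\<dots> = W i k * (W i j * W i k)" using s by (simp add: power2_eq_square algebra_simps)
      finally show ?thesis .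
    qed
    then show ?thesis using False by simp
  qed
qed

lemma S2: assumes "distinct [i,j,k]"
  shows "w i j * w i k = W i j * W i k"
proof -
  obtain l m where d: "distinct [i,j,k,l,m]" using compl3[OF assms] by blast
  show ?thesis
  proof (cases "W l m = 0")
    case False then show ?thesis using S2a d by blast
  next
    case True
    have "W m l \<noteq> 0 \<or> W m i \<noteq> 0" using H2[of m l i] d by auto
    then have Wim: "W i m \<noteq> 0" using True by (auto simp: wedge_swap[of p q m l] wedge_swap[of p q m i])
    have "W l k \<noteq> 0 \<or> W l m \<noteq> 0" using H2[of l k m] d by auto
    then have Wlk: "W l k \<noteq> 0" using True by auto
    have "W l j \<noteq> 0 \<or> W l m \<noteq> 0" using H2[of l j m] d by auto
    then have Wlj: "W l j \<noteq> 0" using True by auto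
    have A: "w l k * w l j = W l k * W l j" using S2a[of l k j i m] d Wim by auto
    have m1: "w i j * w k l = W i j * W k l" using minor[of i j k l] d by auto
    have m2: "w i k * w j l = W i k * W j l" using minor[of i k j l] d by auto
    have e: "w k l * w j l = w l k * w l j" by (simp add: wedge_swap[of u v k l] wedge_swap[of u v j l])
    have e': "W k l * W j l = W l k * W l j" by (simp add: wedge_swap[of p q k l] wedge_swap[of p q j l])
    have "(w i j * w i k) * (W l k * W l j) = (W i j * W i k) * (W l k * W l j)"
    proof -
      have "(w i j * w i k) * (W l k * W l j) = (w i j * w i k) * (w k l * w j l)" using A e by simp
      also have "\<dots> = (w i j * w k l) * (w i k * w j l)" by (simp add: algebra_simps)
      also have "\<dots> = (W i j * W k l) * (W i k * W j l)" using m1 m2 by simp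
      also have "\<dots> = (W i j * W i k) * (W k l * W j l)" by (simp add: algebra_simps)
      finally show ?thesis using e' by simp
    qed
    then show ?thesis using Wlk Wlj by simp
  qed
qed

lemma S3a: assumes "distinct [i,j,k]" "p j * p k + q j * q k \<noteq> 0"
  shows "u i^2 + v i^2 = p i^2 + q i^2"
proof -
  have 1: "(u i^2 + v i^2) * (u j * u k + v j * v k) = (u i * u j + v i * v j)*(u i * u k + v i * v k) + w i j * w i k"
    by (rule sq_id)
  have 2: "(p i^2 + q i^2) * (p j * p k + q j * q k) = (p i * p j + q i * q j)*(p i * p k + q i * q k) + W i j * W i k"
    by (rule sq_id)
  have "(u i^2 + v i^2) * (p j * p k + q j * q k) = (p i^2 + q i^2) * (p j * p k + q j * q k)"
    using 1 2 S2[OF assms(1)] off[of j k] off[of i j] off[of i k] assms(1) by auto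
  then show ?thesis using assms(2) by simp
qed

lemma nzsq: "p i^2 + q i^2 > 0"
  using nz[of i] by (auto simp: add_pos_nonneg add_nonneg_pos)

lemma S3: "u i^2 + v i^2 = p i^2 + q i^2"
proof -
  obtain j k l where d: "distinct [i,j,k,l]" using compl1 by blast
  have "p j * p k + q j * q k \<noteq> 0 \<or> p j * p l + q j * q l \<noteq> 0 \<or> p k * p l + q k * q l \<noteq> 0"
  proof (rule ccontr)
    assume "\<not> ?thesis"
    then have z: "p j * p k + q j * q k = 0" "p j * p l + q j * q l = 0" "p k * p l + q k * q l = 0" by auto
    have "(p j^2+q j^2) * W k l = 0" using orth_id[of p j q k l] z by simp
    then have "W k l = 0" using nzsq[of j] by (metis less_irrefl mult_eq_0_iff)
    then have "(p k^2+q k^2)*(p l^2+q l^2) = 0" using lagr_id[where p=p and q=q and k=k and l=l] z by simp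
    then show False using nzsq[of k] nzsq[of l] by (metis less_irrefl mult_eq_0_iff)
  qed
  then show ?thesis using S3a[of i j k] S3a[of i j l] S3a[of i k l] d by auto
qed

end

lemma rot_id: fixes x1 x2 y1 y2 u1 u2 :: real assumes "u1^2 + u2^2 = 1"
  shows "(x1*u1 + x2*u2)*(y1*u1 + y2*u2) + (-x1*u2 + x2*u1)*(-y1*u2 + y2*u1) = x1*y1 + x2*y2"
proof -
  have "(x1*u1 + x2*u2)*(y1*u1 + y2*u2) + (-x1*u2 + x2*u1)*(-y1*u2 + y2*u1) = (x1*y1 + x2*y2)*(u1^2+u2^2)"
    by algebra
  then show ?thesis using assms by simp
qed

lemma mm_entry: fixes G :: "real^2^'m"
  shows "(G ** transpose G)$i$j = G$i$1 * G$j$1 + G$i$2 * G$j$2"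
  by (simp add: matrix_matrix_mult_def transpose_def sum_2)

lemma mm_entry2: fixes G :: "real^2^'m" and Q :: "real^2^2"
  shows "(G ** Q)$i$k = G$i$1 * Q$1$k + G$i$2 * Q$2$k"
  by (simp add: matrix_matrix_mult_def sum_2)

lemma P1: fixes G :: "real^2^5"
  assumes "subrank G A = 1" "i \<in> A" "j \<in> A"
  shows "wedge (\<lambda>i. G$i$1) (\<lambda>i. G$i$2) i j = 0"
proof -
  let ?S = "{row i G | i. i \<in> A}"
  obtain B where B: "B \<subseteq> ?S" "independent B" "?S \<subseteq> span B" "card B = dim ?S" by (rule basis_exists)
  then have "card B = 1" using assms(1) by (simp add: subrank_def)
  then obtain b where b: "B = {b}" by (auto simp: card_1_singleton_iff)
  have "row i G \<in> span {b}" "row j G \<in> span {b}" using B(3) b assms(2,3) by auto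
  then obtain k1 k2 where "row i G = k1 *\<^sub>R b" "row j G = k2 *\<^sub>R b"
    by (auto simp: real_vector.span_singleton)
  then have "G$i$1 = k1 * b$1" "G$i$2 = k1 * b$2" "G$j$1 = k2 * b$1" "G$j$2 = k2 * b$2"
    by (auto simp: row_def vec_eq_iff)
  then show ?thesis by (simp add: wedge_def)
qed

lemma P2: fixes G :: "real^2^5"
  assumes "a \<in> A" "G$a$1 \<noteq> 0 \<or> G$a$2 \<noteq> 0" "\<And>j. j \<in> A \<Longrightarrow> wedge (\<lambda>i. G$i$1) (\<lambda>i. G$i$2) a j = 0"
  shows "subrank G A = 1"
proof -
  let ?S = "{row i G | i. i \<in> A}"
  have sub: "?S \<subseteq> span {row a G}"
  proof
    fix x assume "x \<in> ?S"
    then obtain j where j: "j \<in> A" "x = row j G" by auto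
    have w: "G$a$1 * G$j$2 - G$a$2 * G$j$1 = 0" using assms(3)[OF j(1)] by (simp add: wedge_def)
    have "\<exists>k. row j G = k *\<^sub>R row a G"
    proof (cases "G$a$1 = 0")
      case False
      have "row j G = (G$j$1 / G$a$1) *\<^sub>R row a G"
        using False w by (simp add: row_def vec_eq_iff forall_2 field_simps)
      then show ?thesis by blast
    next
      case True
      then have "G$a$2 \<noteq> 0" using assms(2) by auto
      have "row j G = (G$j$2 / G$a$2) *\<^sub>R row a G"
        using True \<open>G$a$2 \<noteq> 0\<close> w by (simp add: row_def vec_eq_iff forall_2 field_simps)
      then show ?thesis by blast
    qed
    then show "x \<in> span {row a G}" using j by (auto simp: real_vector.span_singleton)
  qed
  have "dim ?S \<le> card {row a G}" by (rule dim_le_card[OF sub]) simp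
  then have h1: "dim ?S \<le> 1" by simp
  have mem: "row a G \<in> ?S" using assms(1) by auto
  have nzr: "row a G \<noteq> 0" using assms(2) by (auto simp: row_def vec_eq_iff forall_2)
  have h2: "dim ?S \<noteq> 0" unfolding dim_eq_0 using mem nzr by blast
  then show ?thesis unfolding subrank_def using h1 by linarith
qed

context cfg
begin

lemma core_ii:
  assumes d: "distinct [a1,a2,a3,m,n]"
    and q0: "q a1 = 0" "q a2 = 0" "q a3 = 0"
    and p0: "p a1 \<noteq> 0" "p a2 \<noteq> 0" "p a3 \<noteq> 0"
    and qm: "q m \<noteq> 0" "q n \<noteq> 0"
  shows "\<exists>v1 v2. v1^2 + v2^2 = 1 \<and> (\<forall>i. u i * v1 + v i * v2 = p i)
     \<and> -u a1 * v2 + v a1 * v1 = 0 \<and> -u a2 * v2 + v a2 * v1 = 0 \<and> -u a3 * v2 + v a3 * v1 = 0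
     \<and> -u m * v2 + v m * v1 \<noteq> 0 \<and> -u n * v2 + v n * v1 \<noteq> 0
     \<and> (-u m * v2 + v m * v1) * (-u n * v2 + v n * v1) = q m * q n"
proof -
  have W0: "W x y = 0" if "q x = 0" "q y = 0" for x y using that by (simp add: wedge_def)
  have Wn: "W x y \<noteq> 0" if "q x = 0" "p x \<noteq> 0" "q y \<noteq> 0" for x y using that by (simp add: wedge_def)
  have w1m: "w a1 m \<noteq> 0" using minor[of a1 m a2 n] d Wn[of a1 m] Wn[of a2 n] q0 p0 qm by auto
  have w1n: "w a1 n \<noteq> 0" using minor[of a1 n a2 m] d Wn[of a1 n] Wn[of a2 m] q0 p0 qm by auto
  have w2m: "w a2 m \<noteq> 0" using minor[of a2 m a1 n] d Wn[of a1 n] Wn[of a2 m] q0 p0 qm by auto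
  have w3m: "w a3 m \<noteq> 0" using minor[of a3 m a1 n] d Wn[of a1 n] Wn[of a3 m] q0 p0 qm by auto
  have w12: "w a1 a2 = 0" using minor[of a1 a2 a3 m] d W0[of a1 a2] q0 w3m by auto
  have w13: "w a1 a3 = 0" using minor[of a1 a3 a2 m] d W0[of a1 a3] q0 w2m by auto
  have n1: "u a1^2 + v a1^2 = p a1^2"
  proof -
    have 1: "(u a1^2 + v a1^2) * (u a2 * u a3 + v a2 * v a3) = (u a1 * u a2 + v a1 * v a2)*(u a1 * u a3 + v a1 * v a3) + w a1 a2 * w a1 a3"
      by (rule sq_id)
    have 2: "(p a1^2 + q a1^2) * (p a2 * p a3 + q a2 * q a3) = (p a1 * p a2 + q a1 * q a2)*(p a1 * p a3 + q a1 * q a3) + W a1 a2 * W a1 a3"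
      by (rule sq_id)
    have "(u a1^2 + v a1^2) * (p a2 * p a3) = p a1^2 * (p a2 * p a3)"
      using 1 2 w12 off[of a2 a3] off[of a1 a2] off[of a1 a3] d q0 W0[of a1 a2] by auto
    then show ?thesis using p0 by simp
  qed
  define v1 where "v1 = u a1 / p a1"
  define v2 where "v2 = v a1 / p a1"
  have unit: "v1^2 + v2^2 = 1" using n1 p0 by (simp add: v1_def v2_def power_divide add_divide_distrib[symmetric])
  have t: "u i * v1 + v i * v2 = p i" for i
  proof (cases "i = a1")
    case True
    then show ?thesis using n1 p0 by (simp add: v1_def v2_def field_simps power2_eq_square)
  next
    case False
    have "u a1 * u i + v a1 * v i = p a1 * p i" using off[of a1 i] False q0 by simp
    then show ?thesis using p0 by (simp add: v1_def v2_def field_simps)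
  qed
  have tau: "-u i * v2 + v i * v1 = w a1 i / p a1" for i
    using p0 by (simp add: v1_def v2_def wedge_def field_simps)
  have rot: "(u m * v1 + v m * v2)*(u n * v1 + v n * v2) + (-u m * v2 + v m * v1)*(-u n * v2 + v n * v1) = u m * u n + v m * v n"
    by (rule rot_id[OF unit])
  have "(-u m * v2 + v m * v1) * (-u n * v2 + v n * v1) = q m * q n"
    using rot t[of m] t[of n] off[of m n] d by auto
  moreover have "-u a1 * v2 + v a1 * v1 = 0" using tau[of a1] by (simp add: wedge_def)
  moreover have "-u m * v2 + v m * v1 \<noteq> 0" using tau[of m] w1m p0 by simp
  moreover have "-u n * v2 + v n * v1 \<noteq> 0" using tau[of n] w1n p0 by simp
  moreover have "-u a2 * v2 + v a2 * v1 = 0" using tau[of a2] w12 by simp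
  moreover have "-u a3 * v2 + v a3 * v1 = 0" using tau[of a3] w13 by simp
  ultimately show ?thesis using unit t by blast
qed

end

theorem lemma4:
  fixes Sigma Delta :: "real^5^5" and Gamma :: "real^2^5"
  assumes "pos_def Sigma"
    and "pd_diag Delta"
    and "Sigma = Delta + Gamma ** transpose Gamma"
    and "rank Gamma = 2"
    and "\<not> (\<exists>(D'::real^5^5) (G'::real^2^5). pd_diag D' \<and> rank G' \<le> 1 \<and>
                Sigma = D' + G' ** transpose G')"
    and "\<forall>i. \<exists>j. j \<noteq> i \<and> Sigma$i$j \<noteq> 0"
  shows "kmax Gamma \<le> 3
    \<and> (kmax Gamma \<in> {1, 2} \<longrightarrow>
         (\<forall>(D::real^5^5) (G::real^2^5). pd_diag D \<and> Sigma = D + G ** transpose G \<longrightarrow>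
             G ** transpose G = Gamma ** transpose Gamma))
    \<and> (kmax Gamma = 3 \<longrightarrow>
         (\<forall>A::5 set. card A = 3 \<and> subrank Gamma A = 1 \<longrightarrow>
            (\<exists>Q::real^2^2. orthogonal_matrix Q \<and>
               (\<forall>i\<in>A. (Gamma ** Q)$i$2 = 0 \<and> (Gamma ** Q)$i$1 \<noteq> 0) \<and>
               (\<forall>i. i \<notin> A \<longrightarrow> (Gamma ** Q)$i$2 \<noteq> 0) \<and>
               (\<forall>(D::real^5^5) (G::real^2^5). pd_diag D \<and> Sigma = D + G ** transpose G \<longrightarrow>
                  (\<exists>Q'::real^2^2. orthogonal_matrix Q' \<and>
                     (\<forall>i\<in>A. (G ** Q')$i$2 = 0) \<and>
                     (\<forall>i. i \<notin> A \<longrightarrow> (G ** Q')$i$2 \<noteq> 0) \<and>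
                     (\<forall>i. (G ** Q')$i$1 = (Gamma ** Q)$i$1) \<and>
                     (\<Prod>i\<in>-A. (G ** Q')$i$2) = (\<Prod>i\<in>-A. (Gamma ** Q)$i$2))))))"
proof -
  define p where "p = (\<lambda>i. Gamma$i$1)"
  define q where "q = (\<lambda>i. Gamma$i$2)"
  have Sent: "Sigma$i$j = Delta$i$j + (p i * p j + q i * q j)" for i j
    using assms(3) by (simp add: mm_entry p_def q_def)
  have offS: "Sigma$i$j = p i * p j + q i * q j" if "i \<noteq> j" for i j
    using assms(2) that Sent[of i j] by (simp add: pd_diag_def)
  have nz: "p i \<noteq> 0 \<or> q i \<noteq> 0" for i
  proof -
    obtain j where "j \<noteq> i" "Sigma$i$j \<noteq> 0" using assms(6) by blast
    then show ?thesis using offS[of i j] by auto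
  qed
  have nzsq: "p i^2 + q i^2 > 0" for i
    using nz[of i] by (auto simp: add_pos_nonneg add_nonneg_pos)
  have P1': "wedge p q i j = 0" if "subrank Gamma A = 1" "i \<in> A" "j \<in> A" for A i j
    using P1[OF that] by (simp add: p_def q_def)
  have P2': "subrank Gamma A = 1" if "a \<in> A" "\<And>j. j \<in> A \<Longrightarrow> wedge p q a j = 0" for a A
    using P2[of a A Gamma] that nz[of a] by (simp add: p_def q_def)
  have fin: "finite {card A | A::5 set. subrank Gamma A = 1}"
  proof (rule finite_subset[of _ "{..CARD(5)}"])
    show "{card A | A::5 set. subrank Gamma A = 1} \<subseteq> {..CARD(5)}"
    proof
      fix x assume "x \<in> {card A | A::5 set. subrank Gamma A = 1}"
      then obtain A :: "5 set" where "x = card A" by auto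
      moreover have "card A \<le> card (UNIV :: 5 set)" by (rule card_mono) auto
      ultimately show "x \<in> {..CARD(5)}" by simp
    qed
  qed simp
  have kge: "card A \<le> kmax Gamma" if "subrank Gamma A = 1" for A
    unfolding kmax_def by (rule Max_ge[OF fin]) (use that in blast)
  have rotex: "\<exists>u1 u2. u1^2 + u2^2 = 1 \<and> (\<forall>i. -p i * u2 + q i * u1 = wedge p q a i / sqrt (p a^2 + q a^2))
       \<and> sqrt (p a^2 + q a^2) > 0" for a
  proof -
    define c where "c = sqrt (p a^2 + q a^2)"
    have cpos: "c > 0" using nzsq[of a] by (simp add: c_def)
    have csq: "c^2 = p a^2 + q a^2" using nzsq[of a] by (simp add: c_def)
    have "(p a / c)^2 + (q a / c)^2 = 1" using csq cpos nz[of a] by (simp add: power_divide add_divide_distrib[symmetric])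
    moreover have "\<forall>i. -p i * (q a / c) + q i * (p a / c) = wedge p q a i / c"
      using cpos by (simp add: wedge_def field_simps)
    ultimately show ?thesis using cpos unfolding c_def by blast
  qed
  have no4: "\<not> (subrank Gamma B = 1 \<and> card B \<ge> 4)" for B
  proof
    assume B: "subrank Gamma B = 1 \<and> card B \<ge> 4"
    then obtain a where a: "a \<in> B" by (metis all_not_in_conv card.empty not_numeral_le_zero)
    obtain u1 u2 where unit: "u1^2 + u2^2 = 1"
      and bet: "\<And>i. -p i * u2 + q i * u1 = wedge p q a i / sqrt (p a^2 + q a^2)"
      using rotex[of a] by blast
    define \<alpha> where "\<alpha> i = p i * u1 + q i * u2" for i
    define \<beta> where "\<beta> i = -p i * u2 + q i * u1" for i
    have bB: "\<beta> i = 0" if "i \<in> B" for i using bet[of i] P1'[of B a i] B a that by (simp add: \<beta>_def)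
    have bb: "\<beta> i * \<beta> j = 0" if "i \<noteq> j" for i j
    proof (cases "i \<in> B \<or> j \<in> B")
      case True then show ?thesis using bB by auto
    next
      case False
      then have "{i,j} \<subseteq> -B" by auto
      then have "card {i,j} \<le> card (-B)" by (simp add: card_mono)
      moreover have "card (-B) = 5 - card B" by (simp add: Compl_eq_Diff_UNIV card_Diff_subset)
      ultimately have False using that B by (simp, linarith)
      then show ?thesis ..
    qed
    define D' :: "real^5^5" where "D' = Delta + (\<chi> i j. \<beta> i * \<beta> j)"
    define G' :: "real^2^5" where "G' = (\<chi> i j. if j = 1 then \<alpha> i else 0)"
    have "pd_diag D'"
      using assms(2) bb unfolding pd_diag_def D'_def
      by (auto simp: add_pos_nonneg)
    moreover have "rank G' \<le> 1"
    proof -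
      have "rows G' \<subseteq> span {axis 1 1}"
      proof
        fix x assume "x \<in> rows G'"
        then obtain i where "x = row i G'" by (auto simp: rows_def)
        then have "x = \<alpha> i *\<^sub>R axis 1 1"
          by (simp add: G'_def row_def vec_eq_iff forall_2 axis_def)
        then show "x \<in> span {axis 1 1}" by (auto simp: real_vector.span_singleton)
      qed
      then have "dim (rows G') \<le> card {axis 1 (1::real) :: real^2}" by (rule dim_le_card) simp
      then show ?thesis by (simp add: row_rank_def)
    qed
    moreover have "Sigma = D' + G' ** transpose G'"
    proof -
      have "Sigma$i$j = (D' + G' ** transpose G')$i$j" for i j
      proof -
        have "\<alpha> i * \<alpha> j + \<beta> i * \<beta> j = p i * p j + q i * q j"
          unfolding \<alpha>_def \<beta>_def by (rule rot_id[OF unit])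
        then show ?thesis using Sent[of i j] by (simp add: D'_def mm_entry G'_def algebra_simps)
      qed
      then show ?thesis by (simp add: vec_eq_iff)
    qed
    ultimately show False using assms(5) by blast
  qed
  have k3: "kmax Gamma \<le> 3"
  proof -
    have "subrank Gamma {0} = 1" using P2'[of 0 "{0}"] by (simp add: wedge_def)
    then have ne: "{card A | A::5 set. subrank Gamma A = 1} \<noteq> {}" by blast
    show ?thesis unfolding kmax_def using Max_le_iff[OF fin ne] no4 by force
  qed
  have partI: "G ** transpose G = Gamma ** transpose Gamma"
    if k12: "kmax Gamma \<in> {1,2}" and DG: "pd_diag D" "Sigma = D + G ** transpose G" for D :: "real^5^5" and G :: "real^2^5"
  proof -
    define u where "u = (\<lambda>i. G$i$1)"
    define v where "v = (\<lambda>i. G$i$2)"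
    have offG: "u i * u j + v i * v j = p i * p j + q i * q j" if "i \<noteq> j" for i j
    proof -
      have "Sigma$i$j = D$i$j + (u i * u j + v i * v j)" using DG(2) by (simp add: mm_entry u_def v_def)
      then show ?thesis using DG(1) that offS[OF that] by (simp add: pd_diag_def)
    qed
    have H2: "wedge p q i j \<noteq> 0 \<or> wedge p q i k \<noteq> 0" if "distinct [i,j,k]" for i j k
    proof (rule ccontr)
      assume "\<not> ?thesis"
      then have z: "wedge p q i j = 0" "wedge p q i k = 0" by auto
      have "p i * wedge p q j k = p j * wedge p q i k - p k * wedge p q i j"
           "q i * wedge p q j k = q j * wedge p q i k - q k * wedge p q i j"
        by (simp_all add: wedge_def algebra_simps)
      then have "wedge p q j k = 0" using z nz[of i] by auto
      have "subrank Gamma {i,j,k} = 1" by (rule P2'[of i]) (use z in \<open>auto simp: wedge_def\<close>)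
      then have "card {i,j,k} \<le> kmax Gamma" by (rule kge)
      then show False using that k12 by auto
    qed
    interpret c2: cfg2 p q u v
      by unfold_locales (use offG nz H2 in auto)
    have "(G ** transpose G)$i$j = (Gamma ** transpose Gamma)$i$j" for i j
    proof (cases "i = j")
      case True
      then show ?thesis using c2.S3[of i] by (simp add: mm_entry u_def v_def p_def q_def power2_eq_square)
    next
      case False
      then show ?thesis using offG[OF False] by (simp add: mm_entry u_def v_def p_def q_def)
    qed
    then show ?thesis by (simp add: vec_eq_iff)
  qed
  have partII: "\<exists>Q::real^2^2. orthogonal_matrix Q \<and>
               (\<forall>i\<in>A. (Gamma ** Q)$i$2 = 0 \<and> (Gamma ** Q)$i$1 \<noteq> 0) \<and>
               (\<forall>i. i \<notin> A \<longrightarrow> (Gamma ** Q)$i$2 \<noteq> 0) \<and>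
               (\<forall>(D::real^5^5) (G::real^2^5). pd_diag D \<and> Sigma = D + G ** transpose G \<longrightarrow>
                  (\<exists>Q'::real^2^2. orthogonal_matrix Q' \<and>
                     (\<forall>i\<in>A. (G ** Q')$i$2 = 0) \<and>
                     (\<forall>i. i \<notin> A \<longrightarrow> (G ** Q')$i$2 \<noteq> 0) \<and>
                     (\<forall>i. (G ** Q')$i$1 = (Gamma ** Q)$i$1) \<and>
                     (\<Prod>i\<in>-A. (G ** Q')$i$2) = (\<Prod>i\<in>-A. (Gamma ** Q)$i$2)))"
    if A: "card A = 3" "subrank Gamma A = 1" for A :: "5 set"
  proof -
    obtain a1 a2 a3 where A3: "A = {a1,a2,a3}" "a1 \<noteq> a2" "a2 \<noteq> a3" "a1 \<noteq> a3"
      using A(1) by (auto simp: card_3_iff)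
    have "card (-A) = 2" using A(1) by (simp add: Compl_eq_Diff_UNIV card_Diff_subset)
    then obtain m n where mn: "-A = {m,n}" "m \<noteq> n" by (auto simp: card_2_iff)
    have d: "distinct [a1,a2,a3,m,n]" using A3 mn by (auto simp: set_eq_iff)
    have W0: "wedge p q a1 x = 0" if "x \<in> A" for x using P1'[OF A(2) _ that] A3 by auto
    have Wout: "wedge p q a1 x \<noteq> 0" if "x \<notin> A" for x
    proof
      assume h: "wedge p q a1 x = 0"
      have "subrank Gamma (insert x A) = 1" by (rule P2'[of a1]) (use A3 W0 h in auto)
      moreover have "card (insert x A) = 4" using A(1) that by simp
      ultimately show False using no4[of "insert x A"] by simp
    qed
    obtain u1 u2 where unit: "u1^2 + u2^2 = 1"
      and bet: "\<And>i. -p i * u2 + q i * u1 = wedge p q a1 i / sqrt (p a1^2 + q a1^2)"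
      and cpos: "sqrt (p a1^2 + q a1^2) > 0"
      using rotex[of a1] by blast
    define \<alpha> where "\<alpha> i = p i * u1 + q i * u2" for i
    define \<beta> where "\<beta> i = -p i * u2 + q i * u1" for i
    define Q :: "real^2^2" where "Q = (\<chi> i j. if j = 1 then (if i = 1 then u1 else u2) else (if i = 1 then -u2 else u1))"
    have Q1: "(Gamma ** Q)$i$1 = \<alpha> i" for i by (simp add: mm_entry2 Q_def \<alpha>_def p_def q_def)
    have Q2: "(Gamma ** Q)$i$2 = \<beta> i" for i by (simp add: mm_entry2 Q_def \<beta>_def p_def q_def)
    have orthQ: "orthogonal_matrix Q"
      using unit unfolding orthogonal_matrix_def
      by (simp add: vec_eq_iff forall_2 matrix_matrix_mult_def sum_2 transpose_def mat_def Q_def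
          power2_eq_square algebra_simps)
    have rot: "\<alpha> i * \<alpha> j + \<beta> i * \<beta> j = p i * p j + q i * q j" for i j
      unfolding \<alpha>_def \<beta>_def by (rule rot_id[OF unit])
    have bA: "\<beta> i = 0" if "i \<in> A" for i using bet[of i] W0[OF that] by (simp add: \<beta>_def)
    have aA: "\<alpha> i \<noteq> 0" if "i \<in> A" for i
    proof
      assume "\<alpha> i = 0"
      then have "p i * p i + q i * q i = 0" using rot[of i i] bA[OF that] by simp
      then show False using nzsq[of i] by (simp add: power2_eq_square)
    qed
    have bO: "\<beta> i \<noteq> 0" if "i \<notin> A" for i using bet[of i] Wout[OF that] cpos nz[of a1] by (simp add: \<beta>_def)
    have GG: "\<exists>Q'::real^2^2. orthogonal_matrix Q' \<and>
                     (\<forall>i\<in>A. (G ** Q')$i$2 = 0) \<and>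
                     (\<forall>i. i \<notin> A \<longrightarrow> (G ** Q')$i$2 \<noteq> 0) \<and>
                     (\<forall>i. (G ** Q')$i$1 = (Gamma ** Q)$i$1) \<and>
                     (\<Prod>i\<in>-A. (G ** Q')$i$2) = (\<Prod>i\<in>-A. (Gamma ** Q)$i$2)"
      if DG: "pd_diag D" "Sigma = D + G ** transpose G" for D :: "real^5^5" and G :: "real^2^5"
    proof -
      define u where "u = (\<lambda>i. G$i$1)"
      define v where "v = (\<lambda>i. G$i$2)"
      have offG: "u i * u j + v i * v j = \<alpha> i * \<alpha> j + \<beta> i * \<beta> j" if "i \<noteq> j" for i j
      proof -
        have "Sigma$i$j = D$i$j + (u i * u j + v i * v j)" using DG(2) by (simp add: mm_entry u_def v_def)
        then show ?thesis using DG(1) that offS[OF that] rot[of i j] by (simp add: pd_diag_def)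
      qed
      interpret c1: cfg \<alpha> \<beta> u v by unfold_locales (use offG in auto)
      obtain v1 v2 where V: "v1^2 + v2^2 = 1" "\<forall>i. u i * v1 + v i * v2 = \<alpha> i"
        "-u a1 * v2 + v a1 * v1 = 0" "-u a2 * v2 + v a2 * v1 = 0" "-u a3 * v2 + v a3 * v1 = 0"
        "-u m * v2 + v m * v1 \<noteq> 0" "-u n * v2 + v n * v1 \<noteq> 0"
        "(-u m * v2 + v m * v1) * (-u n * v2 + v n * v1) = \<beta> m * \<beta> n"
        using c1.core_ii[OF d] bA aA bO A3 mn by (auto simp: set_eq_iff)
      define Q' :: "real^2^2" where "Q' = (\<chi> i j. if j = 1 then (if i = 1 then v1 else v2) else (if i = 1 then -v2 else v1))"
      have G1: "(G ** Q')$i$1 = u i * v1 + v i * v2" for i by (simp add: mm_entry2 Q'_def u_def v_def)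
      have G2: "(G ** Q')$i$2 = -u i * v2 + v i * v1" for i by (simp add: mm_entry2 Q'_def u_def v_def)
      have orthQ': "orthogonal_matrix Q'"
        using V(1) unfolding orthogonal_matrix_def
        by (simp add: vec_eq_iff forall_2 matrix_matrix_mult_def sum_2 transpose_def mat_def Q'_def
            power2_eq_square algebra_simps)
      have notA: "i = m \<or> i = n" if "i \<notin> A" for i using mn that by auto
      have "(\<Prod>i\<in>-A. (G ** Q')$i$2) = (\<Prod>i\<in>-A. (Gamma ** Q)$i$2)"
        using mn V(8) by (simp add: G2 Q2)
      moreover have "\<forall>i\<in>A. (G ** Q')$i$2 = 0" using A3 V(3-5) by (auto simp: G2)
      moreover have "\<forall>i. i \<notin> A \<longrightarrow> (G ** Q')$i$2 \<noteq> 0" using notA V(6,7) by (auto simp: G2)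
      moreover have "\<forall>i. (G ** Q')$i$1 = (Gamma ** Q)$i$1" using V(2) by (simp add: G1 Q1)
      ultimately show ?thesis using orthQ' by blast
    qed
    show ?thesis
      apply (rule exI[of _ Q])
      using orthQ bA aA bO GG by (simp add: Q1 Q2) blast
  qed
  show ?thesis using k3 partI partII by blast
qed

end
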